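(* Let $K$ be an idempotent ordered TGP-$\omega$-valuation monoid, $AP$ a finite set of atomic propositions, $k\in K\setminus\{\mathbf{0},\mathbf{1}\}$ and $\varphi\in k\text{-}stLTL(K,AP)$. Then $\|\varphi\|$ is $k$-safe.
   Context: Idempotent ordered TGP-$\omega$-valuation monoid $(K,+,\cdot,Val^{\omega},\mathbf{0},\mathbf{1})$: complete (infinitary sums over arbitrary index sets with the usual axioms), idempotent monoid $(K,+,\mathbf{0})$, totally ordered by the natural order $k\le k'$ iff $k'=k'+k$, with $Val^{\omega}$ from finitely-valued sequences in $K$ to $K$ and a product $\cdot$ with zero $\mathbf{0}$ and unit $\mathbf{1}$, such that $Val^{\omega}=\mathbf{0}$ if some entry is $\mathbf{0}$, $Val^{\omega}(\mathbf{1}^{\omega})=\mathbf{1}$, $\sum_I(k\cdot\mathbf{1})=k\cdot\sum_I\mathbf{1}$, $Val^{\omega}$ distributes over finite sums of families lying entirely in $L\setminus\{\mathbf{0},\mathbf{1}\}$ or entirely in $\{\mathbf{0},\mathbf{1}\}$ ($L\subseteq K$ finite), and $Val^{\omega}(\mathbf{1},k_1,\dots)=Val^{\omega}(k_1,\dots)$, $Val^{\omega}(k,\mathbf{1},\dots)=k$, $k\le\mathbf{1}$, $k_i\ge k\ \forall i\Rightarrow Val^{\omega}((k_i)_i)\ge k$. Weighted LTL over $AP$ and $K$: $\varphi::=k\mid a\mid\neg a\mid\varphi\vee\varphi\mid\varphi\wedge\varphi\mid\bigcirc\varphi\mid\varphi U\varphi\mid\square\varphi$, with semantics $\|\varphi\|:(\mathcal{P}(AP))^{\omega}\to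 K$: $(\|k\|,w)=k$; $(\|a\|,w)=\mathbf{1}$ if $a\in w(0)$ else $\mathbf{0}$; $\neg a$ dually; $\vee\mapsto+$, $\wedge\mapsto\cdot$ pointwise; $(\|\bigcirc\varphi\|,w)=(\|\varphi\|,w_{\ge1})$; $(\|\varphi U\psi\|,w)=\sum_{i\ge0}Val^{\omega}((\|\varphi\|,w_{\ge0}),\dots,(\|\varphi\|,w_{\ge i-1}),(\|\psi\|,w_{\ge i}),\mathbf{1},\mathbf{1},\dots)$; $(\|\square\varphi\|,w)=Val^{\omega}(((\|\varphi\|,w_{\ge i}))_{i\ge0})$. $true:=\mathbf{1}$, $\varphi\tilde U\psi:=\square\varphi\vee(\varphi U\psi)$. $sbLTL(K,AP)$: $\varphi::=true\mid a\mid\neg a\mid\varphi\vee\varphi\mid\varphi\wedge\varphi\mid\bigcirc\varphi\mid\varphi\tilde U\varphi\mid\square\varphi$. $L_k=\{k'\in K\mid k'\ge k\}$. $k\text{-}stLTL(K,AP)$ consists of formulas $\bigvee_{1\le i\le n}(k_i\wedge\varphi_i)$ with $k_i\in L_k\setminus\{\mathbf{0},\mathbf{1}\}$, $\varphi_i\in sbLTL(K,AP)$. For $k\in K\setminus\{\mathbf{0},\mathbf{1}\}$, a series $s:(\mathcal{P}(AP))^{\omega}\to K$ is $k$-safe if for every $w$: whenever for every $i>0$ there is $u$ with $(s,w_{<i}u)\ge k$ ($w_{<i}$ the length-$i$ prefix), then $(s,w)\ge k$. *)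

theory Defs
  imports Main
begin

text \<open>Index sets of infinitary sums are subsets of the type idx = nat => nat
  (cardinality continuum); this covers all sums used in the paper (sums over
  nat, and sums over products of countably many finite index sets).\<close>

type_synonym idx = "nat \<Rightarrow> nat"

definition nle :: "('k \<Rightarrow> 'k \<Rightarrow> 'k) \<Rightarrow> 'k \<Rightarrow> 'k \<Rightarrow> bool" where
  "nle add k k' \<longleftrightarrow> k' = add k' k"

definition nsum :: "(idx set \<Rightarrow> (idx \<Rightarrow> 'k) \<Rightarrow> 'k) \<Rightarrow> nat set \<Rightarrow> (nat \<Rightarrow> 'k) \<Rightarrow> 'k" where
  "nsum SumK A F = SumK ((\<lambda>i (_::nat). i) ` A) (\<lambda>g. F (g 0))"

definition fin_valued :: "(nat \<Rightarrow> 'k) \<Rightarrow> bool" where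
  "fin_valued f \<longleftrightarrow> finite (range f)"

locale idem_ord_TGP_omega_vm =
  fixes add :: "'k \<Rightarrow> 'k \<Rightarrow> 'k"
    and zero :: 'k
    and one :: 'k
    and mult :: "'k \<Rightarrow> 'k \<Rightarrow> 'k"
    and Val :: "(nat \<Rightarrow> 'k) \<Rightarrow> 'k"
    and SumK :: "idx set \<Rightarrow> (idx \<Rightarrow> 'k) \<Rightarrow> 'k"
  assumes add_assoc: "add (add a b) c = add a (add b c)"
    and add_zero_left: "add zero a = a"
    and add_zero_right: "add a zero = a"
    and add_idem: "add a a = a"
    and Sum_cong: "(\<And>i. i \<in> I \<Longrightarrow> f i = g i) \<Longrightarrow> SumK I f = SumK I g"
    and Sum_empty: "SumK {} f = zero"
    and Sum_single: "SumK {j} f = f j"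
    and Sum_pair: "j \<noteq> l \<Longrightarrow> SumK {j, l} f = add (f j) (f l)"
    and Sum_partition:
      "I = (\<Union>j\<in>J. P j) \<Longrightarrow> (\<And>j j'. j \<in> J \<Longrightarrow> j' \<in> J \<Longrightarrow> j \<noteq> j' \<Longrightarrow> P j \<inter> P j' = {})
        \<Longrightarrow> SumK I f = SumK J (\<lambda>j. SumK (P j) f)"
    and total: "nle add a b \<or> nle add b a"
    and mult_zero_left: "mult zero a = zero"
    and mult_zero_right: "mult a zero = zero"
    and mult_one_left: "mult one a = a"
    and mult_one_right: "mult a one = a"
    and Val_zero: "fin_valued v \<Longrightarrow> v i = zero \<Longrightarrow> Val v = zero"
    and Val_one: "Val (\<lambda>_. one) = one"
    and Sum_mult_one: "SumK I' (\<lambda>_. mult a one) = mult a (SumK I' (\<lambda>_. one))"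
    and Val_distrib:
      "finite L \<Longrightarrow> (\<And>n. finite (JJ n)) \<Longrightarrow>
       (\<forall>n. \<forall>m\<in>JJ n. ff n m \<in> L - {zero, one}) \<or> (\<forall>n. \<forall>m\<in>JJ n. ff n m \<in> {zero, one}) \<Longrightarrow>
       Val (\<lambda>n. nsum SumK (JJ n) (ff n)) = SumK {gg. \<forall>n. gg n \<in> JJ n} (\<lambda>gg. Val (\<lambda>n. ff n (gg n)))"
    and Val_one_head: "fin_valued v \<Longrightarrow> Val (\<lambda>n. if n = 0 then one else v (n - 1)) = Val v"
    and Val_head_ones: "Val (\<lambda>n. if n = 0 then a else one) = a"
    and le_one: "nle add a one"
    and Val_lower: "fin_valued v \<Longrightarrow> (\<And>i. nle add a (v i)) \<Longrightarrow> nle add a (Val v)"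

datatype ('k, 'a) wltl =
    Const 'k
  | Prop 'a
  | NProp 'a
  | Or "('k, 'a) wltl" "('k, 'a) wltl"
  | And "('k, 'a) wltl" "('k, 'a) wltl"
  | Next "('k, 'a) wltl"
  | Until "('k, 'a) wltl" "('k, 'a) wltl"
  | Box "('k, 'a) wltl"

definition suffix :: "nat \<Rightarrow> (nat \<Rightarrow> 'a) \<Rightarrow> (nat \<Rightarrow> 'a)" where
  "suffix n w = (\<lambda>i. w (n + i))"

primrec sem :: "('k \<Rightarrow> 'k \<Rightarrow> 'k) \<Rightarrow> 'k \<Rightarrow> 'k \<Rightarrow> ('k \<Rightarrow> 'k \<Rightarrow> 'k) \<Rightarrow> ((nat \<Rightarrow> 'k) \<Rightarrow> 'k)
    \<Rightarrow> (idx set \<Rightarrow> (idx \<Rightarrow> 'k) \<Rightarrow> 'k) \<Rightarrow> ('k, 'a) wltl \<Rightarrow> (nat \<Rightarrow> 'a set) \<Rightarrow> 'k" where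
  "sem add zero one mult Val SumK (Const k) w = k"
| "sem add zero one mult Val SumK (Prop a) w = (if a \<in> w 0 then one else zero)"
| "sem add zero one mult Val SumK (NProp a) w = (if a \<in> w 0 then zero else one)"
| "sem add zero one mult Val SumK (Or \<phi> \<psi>) w =
     add (sem add zero one mult Val SumK \<phi> w) (sem add zero one mult Val SumK \<psi> w)"
| "sem add zero one mult Val SumK (And \<phi> \<psi>) w =
     mult (sem add zero one mult Val SumK \<phi> w) (sem add zero one mult Val SumK \<psi> w)"
| "sem add zero one mult Val SumK (Next \<phi>) w = sem add zero one mult Val SumK \<phi> (suffix 1 w)"
| "sem add zero one mult Val SumK (Until \<phi> \<psi>) w =
     nsum SumK UNIV (\<lambda>i. Val (\<lambda>j. if j < i then sem add zero one mult Val SumK \<phi> (suffix j w)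
                                else if j = i then sem add zero one mult Val SumK \<psi> (suffix i w)
                                else one))"
| "sem add zero one mult Val SumK (Box \<phi>) w = Val (\<lambda>i. sem add zero one mult Val SumK \<phi> (suffix i w))"

definition WUntil :: "('k, 'a) wltl \<Rightarrow> ('k, 'a) wltl \<Rightarrow> ('k, 'a) wltl" where
  "WUntil \<phi> \<psi> = Or (Box \<phi>) (Until \<phi> \<psi>)"

inductive sbLTL :: "'k \<Rightarrow> ('k, 'a) wltl \<Rightarrow> bool" for one :: 'k where
  sb_true: "sbLTL one (Const one)"
| sb_prop: "sbLTL one (Prop a)"
| sb_nprop: "sbLTL one (NProp a)"
| sb_or: "sbLTL one \<phi> \<Longrightarrow> sbLTL one \<psi> \<Longrightarrow> sbLTL one (Or \<phi> \<psi>)"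
| sb_and: "sbLTL one \<phi> \<Longrightarrow> sbLTL one \<psi> \<Longrightarrow> sbLTL one (And \<phi> \<psi>)"
| sb_next: "sbLTL one \<phi> \<Longrightarrow> sbLTL one (Next \<phi>)"
| sb_wuntil: "sbLTL one \<phi> \<Longrightarrow> sbLTL one \<psi> \<Longrightarrow> sbLTL one (WUntil \<phi> \<psi>)"
| sb_box: "sbLTL one \<phi> \<Longrightarrow> sbLTL one (Box \<phi>)"

fun bigOr :: "('k, 'a) wltl list \<Rightarrow> ('k, 'a) wltl" where
  "bigOr [] = undefined"
| "bigOr [\<phi>] = \<phi>"
| "bigOr (\<phi> # \<psi> # \<psi>s) = Or \<phi> (bigOr (\<psi> # \<psi>s))"

definition Lk :: "('k \<Rightarrow> 'k \<Rightarrow> 'k) \<Rightarrow> 'k \<Rightarrow> 'k set" where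
  "Lk add k = {k'. nle add k k'}"

definition k_stLTL :: "('k \<Rightarrow> 'k \<Rightarrow> 'k) \<Rightarrow> 'k \<Rightarrow> 'k \<Rightarrow> 'k \<Rightarrow> ('k, 'a) wltl \<Rightarrow> bool" where
  "k_stLTL add zero one k \<phi> \<longleftrightarrow>
     (\<exists>ps :: ('k \<times> ('k, 'a) wltl) list. ps \<noteq> [] \<and>
        (\<forall>(ki, \<phi>i) \<in> set ps. ki \<in> Lk add k - {zero, one} \<and> sbLTL one \<phi>i) \<and>
        \<phi> = bigOr (map (\<lambda>(ki, \<phi>i). And (Const ki) \<phi>i) ps))"

definition prefix_conc :: "nat \<Rightarrow> (nat \<Rightarrow> 'a) \<Rightarrow> (nat \<Rightarrow> 'a) \<Rightarrow> (nat \<Rightarrow> 'a)" where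
  "prefix_conc i w u = (\<lambda>j. if j < i then w j else u (j - i))"

definition k_safe :: "('k \<Rightarrow> 'k \<Rightarrow> 'k) \<Rightarrow> 'k \<Rightarrow> ((nat \<Rightarrow> 'a set) \<Rightarrow> 'k) \<Rightarrow> bool" where
  "k_safe add k s \<longleftrightarrow>
     (\<forall>w. (\<forall>i>0. \<exists>u. nle add k (s (prefix_conc i w u))) \<longrightarrow> nle add k (s w))"

end

theory Submission
  imports Defs
begin

primrec holds :: "'k \<Rightarrow> ('k, 'a) wltl \<Rightarrow> (nat \<Rightarrow> 'a set) \<Rightarrow> bool" where
  "holds one (Const c) w = (c = one)"
| "holds one (Prop a) w = (a \<in> w 0)"
| "holds one (NProp a) w = (a \<notin> w 0)"
| "holds one (Or \<phi> \<psi>) w = (holds one \<phi> w \<or> holds one \<psi> w)"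
| "holds one (And \<phi> \<psi>) w = (holds one \<phi> w \<and> holds one \<psi> w)"
| "holds one (Next \<phi>) w = holds one \<phi> (suffix 1 w)"
| "holds one (Until \<phi> \<psi>) w = (\<exists>i. holds one \<psi> (suffix i w) \<and> (\<forall>j<i. holds one \<phi> (suffix j w)))"
| "holds one (Box \<phi>) w = (\<forall>i. holds one \<phi> (suffix i w))"

definition ext :: "'k \<Rightarrow> ('k, 'a) wltl \<Rightarrow> (nat \<Rightarrow> 'a set) \<Rightarrow> nat \<Rightarrow> bool" where
  "ext one \<phi> w p \<longleftrightarrow> (\<exists>u. holds one \<phi> (prefix_conc p w u))"

definition closedf :: "'k \<Rightarrow> ('k, 'a) wltl \<Rightarrow> bool" where
  "closedf one \<phi> \<longleftrightarrow> (\<forall>w. (\<forall>p. ext one \<phi> w p) \<longrightarrow> holds one \<phi> w)"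

lemma closedfD: "closedf one \<phi> \<Longrightarrow> (\<And>p. ext one \<phi> w p) \<Longrightarrow> holds one \<phi> w"
  unfolding closedf_def by blast

lemma suffix_prefix_conc:
  "i \<le> M \<Longrightarrow> suffix i (prefix_conc M w u) = prefix_conc (M - i) (suffix i w) u"
  by (auto simp: suffix_def prefix_conc_def fun_eq_iff add.commute)

lemma prefix_conc_down:
  "q \<le> p \<Longrightarrow> prefix_conc q w (suffix q (prefix_conc p w u)) = prefix_conc p w u"
  by (auto simp: suffix_def prefix_conc_def fun_eq_iff)

lemma ext_down: "ext one \<phi> w p \<Longrightarrow> q \<le> p \<Longrightarrow> ext one \<phi> w q"
  unfolding ext_def by (metis prefix_conc_down)

lemma ext_suffix:
  assumes "\<And>v. holds one \<psi> v \<Longrightarrow> holds one \<phi> (suffix n v)" "ext one \<psi> w (n + p)"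
  shows "ext one \<phi> (suffix n w) p"
proof -
  obtain u where "holds one \<psi> (prefix_conc (n + p) w u)" using assms(2) ext_def by metis
  then have "holds one \<phi> (suffix n (prefix_conc (n + p) w u))" using assms(1) by blast
  then show ?thesis unfolding ext_def using suffix_prefix_conc[of n "n+p" w u] by auto
qed

lemma common_bad:
  assumes "finite S" "\<forall>x\<in>S. \<exists>p. \<not> ext one (fst x) (snd x) p"
  shows "\<exists>M. \<forall>x\<in>S. \<forall>m\<ge>M. \<not> ext one (fst x) (snd x) m"
  using assms
proof (induction S rule: finite_induct)
  case empty
  then show ?case by auto
next
  case (insert x F)
  then obtain M where M: "\<forall>x\<in>F. \<forall>m\<ge>M. \<not> ext one (fst x) (snd x) m" by auto
  obtain p where p: "\<not> ext one (fst x) (snd x) p" using insert by auto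
  show ?case
    apply (rule exI[of _ "M + p"])
    using M p ext_down by (metis insert_iff le_add1 le_add2 order_trans)
qed

lemma closed_sb: "sbLTL one \<phi> \<Longrightarrow> closedf one \<phi>"
proof (induction rule: sbLTL.induct)
  case sb_true
  then show ?case by (simp add: closedf_def)
next
  case (sb_prop a)
  then show ?case unfolding closedf_def ext_def
    by (metis holds.simps(2) prefix_conc_def zero_less_one)
next
  case (sb_nprop a)
  then show ?case unfolding closedf_def ext_def
    by (metis holds.simps(3) prefix_conc_def zero_less_one)
next
  case (sb_or \<phi> \<psi>)
  show ?case unfolding closedf_def
  proof (intro allI impI)
    fix w assume all: "\<forall>p. ext one (Or \<phi> \<psi>) w p"
    show "holds one (Or \<phi> \<psi>) w"
    proof (rule ccontr)
      assume "\<not> ?thesis"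
      then have "\<forall>x\<in>{(\<phi>, w), (\<psi>, w)}. \<exists>p. \<not> ext one (fst x) (snd x) p"
        using sb_or.IH unfolding closedf_def by auto
      then obtain M where "\<forall>x\<in>{(\<phi>, w), (\<psi>, w)}. \<forall>m\<ge>M. \<not> ext one (fst x) (snd x) m"
        using common_bad[of "{(\<phi>, w), (\<psi>, w)}" one] by auto
      moreover have "ext one (Or \<phi> \<psi>) w M" using all by auto
      ultimately show False unfolding ext_def by auto
    qed
  qed
next
  case (sb_and \<phi> \<psi>)
  then show ?case unfolding closedf_def ext_def by (simp, meson)
next
  case (sb_next \<phi>)
  show ?case unfolding closedf_def
  proof (intro allI impI)
    fix w assume all: "\<forall>p. ext one (Next \<phi>) w p"
    have "ext one \<phi> (suffix 1 w) p" for p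
      by (rule ext_suffix[of one "Next \<phi>"]) (use all in auto)
    then show "holds one (Next \<phi>) w" using sb_next.IH unfolding closedf_def by auto
  qed
next
  case (sb_box \<phi>)
  show ?case unfolding closedf_def
  proof (intro allI impI)
    fix w assume all: "\<forall>p. ext one (Box \<phi>) w p"
    have "ext one \<phi> (suffix n w) p" for p n
      by (rule ext_suffix[of one "Box \<phi>"]) (use all in auto)
    have "holds one \<phi> (suffix n w)" for n
    proof -
      show ?thesis by (rule closedfD[OF sb_box.IH]) fact
    qed
    then show "holds one (Box \<phi>) w" by simp
  qed
next
  case (sb_wuntil \<phi> \<psi>)
  show ?case unfolding closedf_def
  proof (intro allI impI)
    fix w assume all: "\<forall>p. ext one (WUntil \<phi> \<psi>) w p"
    show "holds one (WUntil \<phi> \<psi>) w"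
    proof (rule ccontr)
      assume neg: "\<not> ?thesis"
      then have "\<exists>n. \<not> holds one \<phi> (suffix n w)" by (auto simp: WUntil_def)
      then obtain n where n: "\<not> holds one \<phi> (suffix n w)" and nmin: "\<forall>j<n. holds one \<phi> (suffix j w)"
        using exists_least_iff[of "\<lambda>n. \<not> holds one \<phi> (suffix n w)"] by auto
      have notpsi: "\<not> holds one \<psi> (suffix i w)" if "i \<le> n" for i
        using neg nmin that by (auto simp: WUntil_def)
      let ?S = "insert (\<phi>, suffix n w) ((\<lambda>i. (\<psi>, suffix i w)) ` {..n})"
      have "\<forall>x\<in>?S. \<exists>p. \<not> ext one (fst x) (snd x) p"
      proof
        fix x assume "x \<in> ?S"
        then show "\<exists>p. \<not> ext one (fst x) (snd x) p"
        proof
          assume "x = (\<phi>, suffix n w)"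
          then show ?thesis using closedfD[OF sb_wuntil.IH(1), of "suffix n w"] n by auto
        next
          assume "x \<in> (\<lambda>i. (\<psi>, suffix i w)) ` {..n}"
          then obtain i where "i \<le> n" "x = (\<psi>, suffix i w)" by auto
          then show ?thesis using closedfD[OF sb_wuntil.IH(2), of "suffix i w"] notpsi by auto
        qed
      qed
      then obtain M where M: "\<forall>x\<in>?S. \<forall>m\<ge>M. \<not> ext one (fst x) (snd x) m"
        using common_bad[of ?S one] by auto
      obtain u where u: "holds one (WUntil \<phi> \<psi>) (prefix_conc (M + n) w u)"
        using all ext_def by metis
      have sfx: "suffix i (prefix_conc (M + n) w u) = prefix_conc (M + n - i) (suffix i w) u"
        if "i \<le> n" for i using that by (intro suffix_prefix_conc) simp
      have nphi: "\<not> holds one \<phi> (suffix n (prefix_conc (M + n) w u))"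
        using M sfx[of n] unfolding ext_def by fastforce
      have npsi: "\<not> holds one \<psi> (suffix i (prefix_conc (M + n) w u))" if "i \<le> n" for i
      proof -
        have "\<not> ext one \<psi> (suffix i w) (M + n - i)" using M that by auto
        then show ?thesis using sfx[OF that] unfolding ext_def by auto
      qed
      have "holds one (Box \<phi>) (prefix_conc (M + n) w u) \<or> holds one (Until \<phi> \<psi>) (prefix_conc (M + n) w u)"
        using u unfolding WUntil_def by simp
      then show False
      proof
        assume "holds one (Box \<phi>) (prefix_conc (M + n) w u)"
        then show False using nphi by simp
      next
        assume "holds one (Until \<phi> \<psi>) (prefix_conc (M + n) w u)"
        then obtain i where i1: "holds one \<psi> (suffix i (prefix_conc (M + n) w u))"
          and i2: "\<forall>j<i. holds one \<phi> (suffix j (prefix_conc (M + n) w u))" by auto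
        show False
        proof (cases "i \<le> n")
          case True then show False using npsi i1 by blast
        next
          case False then show False using i2 nphi by auto
        qed
      qed
    qed
  qed
qed


context idem_ord_TGP_omega_vm
begin

lemma add_comm: "add a b = add b a"
proof -
  define j :: idx where "j = (\<lambda>_. 0)"
  define l :: idx where "l = (\<lambda>_. 1)"
  have jl: "j \<noteq> l" unfolding j_def l_def by (metis one_neq_zero)
  define f where "f = (\<lambda>x. if x = j then a else b)"
  have "SumK {j, l} f = add (f j) (f l)" using Sum_pair[OF jl] .
  moreover have "SumK {l, j} f = add (f l) (f j)" using Sum_pair jl by metis
  ultimately show ?thesis using jl unfolding f_def by (simp add: insert_commute)
qed

lemma add_one_left: "add one a = one"
  using le_one[of a] unfolding nle_def by simp

lemma add_one_right: "add a one = one"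
  using add_one_left add_comm by metis

lemma nle_trans: "nle add a b \<Longrightarrow> nle add b c \<Longrightarrow> nle add a c"
  unfolding nle_def by (metis add_assoc)

lemma trivial_if_zero_one: "zero = one \<Longrightarrow> a = zero"
  using add_one_left[of a] add_zero_left[of a] by simp

lemma Sum_zero: "SumK I (\<lambda>_. zero) = zero"
  using Sum_mult_one[of I zero] by (simp add: mult_zero_left)

lemma Sum01:
  assumes "\<forall>i\<in>I. f i = zero \<or> f i = one"
  shows "SumK I f = (if \<exists>i\<in>I. f i = one then one else zero)"
proof (cases "\<exists>i\<in>I. f i = one")
  case True
  then obtain i where i: "i \<in> I" "f i = one" by auto
  define j0 :: idx where "j0 = (\<lambda>_. 0)"
  define j1 :: idx where "j1 = (\<lambda>_. 1)"
  have jl: "j0 \<noteq> j1" unfolding j0_def j1_def by (metis one_neq_zero)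
  define P where "P = (\<lambda>j. if j = j0 then {i} else I - {i})"
  have "SumK I f = SumK {j0, j1} (\<lambda>j. SumK (P j) f)"
    by (rule Sum_partition) (use i jl in \<open>auto simp: P_def\<close>)
  also have "\<dots> = add (SumK {i} f) (SumK (I - {i}) f)"
    using Sum_pair[OF jl] jl by (simp add: P_def)
  also have "\<dots> = one" using i by (simp add: Sum_single add_one_left)
  finally show ?thesis using True by simp
next
  case False
  then have "SumK I f = SumK I (\<lambda>_. zero)" using assms by (intro Sum_cong) auto
  then show ?thesis using False Sum_zero by simp
qed

lemma Val_bool:
  assumes "zero \<noteq> one"
  shows "Val (\<lambda>i. if P i then one else zero) = (if \<forall>i. P i then one else zero)"
proof (cases "\<forall>i. P i")
  case True
  then show ?thesis using Val_one by simp
next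
  case False
  then obtain i where "\<not> P i" by auto
  moreover have "fin_valued (\<lambda>i. if P i then one else zero)"
    unfolding fin_valued_def by (rule finite_subset[of _ "{zero, one}"]) auto
  ultimately show ?thesis using Val_zero[of "\<lambda>i. if P i then one else zero" i] False by auto
qed

lemma nsum_bool:
  "nsum SumK UNIV (\<lambda>i. if P i then one else zero) = (if \<exists>i. P i then one else zero)"
proof -
  have "nsum SumK UNIV (\<lambda>i. if P i then one else zero)
     = SumK (range (\<lambda>i (_::nat). i)) (\<lambda>g. if P (g 0) then one else zero)"
    unfolding nsum_def by simp
  also have "\<dots> = (if \<exists>g\<in>range (\<lambda>i (_::nat). i). (if P (g 0) then one else zero) = one then one else zero)"
    by (rule Sum01) auto
  also have "\<dots> = (if \<exists>i. P i then one else zero)"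
    by (cases "zero = one") auto
  finally show ?thesis .
qed

lemma add_bool:
  "add (if P then one else zero) (if Q then one else zero) = (if P \<or> Q then one else zero)"
  by (simp add: add_idem add_one_left add_one_right add_zero_left)

lemma mult_bool:
  "mult (if P then one else zero) (if Q then one else zero) = (if P \<and> Q then one else zero)"
  by (simp add: mult_one_left mult_zero_left)

lemma sem_bool:
  assumes "sbLTL one \<phi>" "zero \<noteq> one"
  shows "sem add zero one mult Val SumK \<phi> w = (if holds one \<phi> w then one else zero)"
  using assms(1)
proof (induction arbitrary: w rule: sbLTL.induct)
  case sb_true
  then show ?case by simp
next
  case (sb_prop a)
  then show ?case by simp
next
  case (sb_nprop a)
  then show ?case by simp
next
  case (sb_or \<phi> \<psi>)
  then show ?case by (simp add: add_bool)
next
  case (sb_and \<phi> \<psi>)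
  then show ?case by (simp add: mult_bool)
next
  case (sb_next \<phi>)
  then show ?case by simp
next
  case (sb_box \<phi>)
  then show ?case using Val_bool[OF assms(2)] by simp
next
  case (sb_wuntil \<phi> \<psi>)
  have box: "Val (\<lambda>i. sem add zero one mult Val SumK \<phi> (suffix i w)) = (if holds one (Box \<phi>) w then one else zero)"
    using sb_wuntil.IH Val_bool[OF assms(2)] by simp
  have inner: "Val (\<lambda>j. if j < i then sem add zero one mult Val SumK \<phi> (suffix j w)
                                else if j = i then sem add zero one mult Val SumK \<psi> (suffix i w)
                                else one)
     = (if holds one \<psi> (suffix i w) \<and> (\<forall>j<i. holds one \<phi> (suffix j w)) then one else zero)" for i
  proof -
    have "(\<lambda>j. if j < i then sem add zero one mult Val SumK \<phi> (suffix j w)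
                                else if j = i then sem add zero one mult Val SumK \<psi> (suffix i w)
                                else one)
        = (\<lambda>j. if (j < i \<longrightarrow> holds one \<phi> (suffix j w)) \<and> (j = i \<longrightarrow> holds one \<psi> (suffix i w)) then one else zero)"
      using sb_wuntil.IH by (auto simp: fun_eq_iff)
    moreover have "(\<forall>j. (j < i \<longrightarrow> holds one \<phi> (suffix j w)) \<and> (j = i \<longrightarrow> holds one \<psi> (suffix i w)))
        \<longleftrightarrow> holds one \<psi> (suffix i w) \<and> (\<forall>j<i. holds one \<phi> (suffix j w))" by auto
    ultimately show ?thesis using Val_bool[OF assms(2)] by simp
  qed
  have until: "sem add zero one mult Val SumK (Until \<phi> \<psi>) w = (if holds one (Until \<phi> \<psi>) w then one else zero)"
    by (simp only: sem.simps inner nsum_bool holds.simps)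
  show ?case unfolding WUntil_def
    by (simp only: sem.simps(4) until) (simp add: box add_bool)
qed

lemma nle_add_iff: "nle add k (add a b) \<longleftrightarrow> nle add k a \<or> nle add k b"
proof (cases "nle add a b")
  case True
  then have "add a b = b" unfolding nle_def using add_comm by metis
  then show ?thesis using True nle_trans by auto
next
  case False
  then have "nle add b a" using total by blast
  then have "add a b = a" unfolding nle_def by metis
  then show ?thesis using \<open>nle add b a\<close> nle_trans by auto
qed

lemma nle_zero: "nle add k zero \<Longrightarrow> k = zero"
  unfolding nle_def by (simp add: add_zero_left)

lemma bigOr_sem:
  fixes ps :: "('k \<times> ('k, 'a) wltl) list"
  assumes "ps \<noteq> []" "\<forall>(ki, \<phi>i) \<in> set ps. ki \<in> Lk add k - {zero, one} \<and> sbLTL one \<phi>i"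
    "k \<noteq> zero" "zero \<noteq> one"
  shows "nle add k (sem add zero one mult Val SumK (bigOr (map (\<lambda>(ki, \<phi>i). And (Const ki) \<phi>i) ps)) w)
     \<longleftrightarrow> (\<exists>x\<in>set ps. holds one (snd x) w)"
  using assms(1,2)
proof (induction ps)
  case Nil
  then show ?case by simp
next
  case (Cons x ps)
  obtain ki \<phi>i where x: "x = (ki, \<phi>i)" by (cases x)
  have ki: "nle add k ki" and sb: "sbLTL one \<phi>i" using Cons.prems x by (auto simp: Lk_def)
  have hd: "nle add k (sem add zero one mult Val SumK (And (Const ki) \<phi>i) w) \<longleftrightarrow> holds one \<phi>i w"
    using sem_bool[OF sb assms(4)] ki nle_zero assms(3) by (auto simp: mult_one_right mult_zero_right)
  show ?case
  proof (cases ps)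
    case Nil
    then show ?thesis using hd x by simp
  next
    case (Cons y ys)
    have "nle add k (sem add zero one mult Val SumK (bigOr (map (\<lambda>(ki, \<phi>i). And (Const ki) \<phi>i) ps)) w)
     \<longleftrightarrow> (\<exists>x\<in>set ps. holds one (snd x) w)" using Cons.IH Cons.prems Cons by auto
    then show ?thesis using hd x Cons by (simp add: nle_add_iff)
  qed
qed

end

theorem lemma8:
  fixes add :: "'k \<Rightarrow> 'k \<Rightarrow> 'k" and zero one :: 'k and mult :: "'k \<Rightarrow> 'k \<Rightarrow> 'k"
    and Val :: "(nat \<Rightarrow> 'k) \<Rightarrow> 'k" and SumK :: "idx set \<Rightarrow> (idx \<Rightarrow> 'k) \<Rightarrow> 'k"
    and k :: 'k and \<phi> :: "('k, 'a::finite) wltl"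
  assumes "idem_ord_TGP_omega_vm add zero one mult Val SumK"
    and "k \<noteq> zero" and "k \<noteq> one"
    and "k_stLTL add zero one k \<phi>"
  shows "k_safe add k (sem add zero one mult Val SumK \<phi>)"
proof -
  interpret V: idem_ord_TGP_omega_vm add zero one mult Val SumK by fact
  have zo: "zero \<noteq> one" using V.trivial_if_zero_one assms(2) by blast
  obtain ps :: "('k \<times> ('k, 'a) wltl) list" where ps: "ps \<noteq> []"
    "\<forall>(ki, \<phi>i) \<in> set ps. ki \<in> Lk add k - {zero, one} \<and> sbLTL one \<phi>i"
    "\<phi> = bigOr (map (\<lambda>(ki, \<phi>i). And (Const ki) \<phi>i) ps)"
    using assms(4) unfolding k_stLTL_def by blast
  have iff: "nle add k (sem add zero one mult Val SumK \<phi> v) \<longleftrightarrow> (\<exists>x\<in>set ps. holds one (snd x) v)" for v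
    using V.bigOr_sem[OF ps(1,2) assms(2) zo] ps(3) by simp
  have cl: "closedf one (snd x)" if "x \<in> set ps" for x
  proof -
    have "sbLTL one (snd x)" using ps(2) that by (cases x) auto
    then show ?thesis by (rule closed_sb)
  qed
  show ?thesis unfolding k_safe_def
  proof (intro allI impI)
    fix w assume H: "\<forall>i>0. \<exists>u. nle add k (sem add zero one mult Val SumK \<phi> (prefix_conc i w u))"
    show "nle add k (sem add zero one mult Val SumK \<phi> w)"
    proof (rule ccontr)
      assume "\<not> ?thesis"
      then have nh: "\<forall>x\<in>set ps. \<not> holds one (snd x) w" using iff by blast
      let ?S = "(\<lambda>x. (snd x, w)) ` set ps"
      have "\<forall>y\<in>?S. \<exists>p. \<not> ext one (fst y) (snd y) p"
      proof
        fix y assume "y \<in> ?S"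
        then obtain x where x: "x \<in> set ps" "y = (snd x, w)" by auto
        show "\<exists>p. \<not> ext one (fst y) (snd y) p"
          using closedfD[OF cl[OF x(1)], of w] nh x by auto
      qed
      then obtain M where M: "\<forall>y\<in>?S. \<forall>m\<ge>M. \<not> ext one (fst y) (snd y) m"
        using common_bad[of ?S one] by auto
      obtain u where "nle add k (sem add zero one mult Val SumK \<phi> (prefix_conc (M + 1) w u))"
        using H by auto
      then obtain x where x: "x \<in> set ps" "holds one (snd x) (prefix_conc (M + 1) w u)"
        using iff by blast
      then have "ext one (snd x) w (M + 1)" unfolding ext_def by blast
      then show False using M x(1) by force
    qed
  qed
qed

end
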